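(* Let $V$ be a complex vector space of dimension $N$, $\underline v=(v_1,\dots,v_N)$ a basis of $V$, $\underline a\in\mathbb R^N$, $\|\cdot\|$ a Hermitian norm on $V$ admitting $\underline v$ as an orthogonal basis, and $\|\cdot\|'$ an arbitrary norm on $V$. Then for every $p\in[1,\infty]$, $$d_p\big(\iota_{\underline v}(\|\cdot\|,\underline a),\iota^1_{\underline v}(\|\cdot\|',\underline a)\big)\le d_\infty(\|\cdot\|,\|\cdot\|')+\log N.$$
   Context: For two norms $\|\cdot\|,\|\cdot\|'$ on $V$ ($\dim V=N$), the successive minima are $\lambda_i(\|\cdot\|,\|\cdot\|')=\sup_{W\in\mathrm{Grass}_i(V)}\inf_{w\in W\setminus\{0\}}\log(\|w\|'/\|w\|)$, $i=1,\dots,N$; for $p\in[1,\infty)$, $d_p(\|\cdot\|,\|\cdot\|')^p=N^{-1}\sum_i|\lambda_i|^p$ and $d_\infty=\max_i|\lambda_i|$. Given a Hermitian norm $\|\cdot\|$ with orthogonal basis $\underline v$ and $\underline a\in\mathbb R^N$, $\iota_{\underline v}(\|\cdot\|,\underline a)$ is the Hermitian norm with orthogonal basis $\underline v$ and $\iota_{\underline v}(\|\cdot\|,\underline a)(v_i)=\|v_i\|e^{-a_i}$. For any norm $\|\cdot\|'$, let $\|\cdot\|^{NA}_{\underline v,\underline a}$ be the non-Archimedean norm $\|\sum\alpha_iv_i\|^{NA}_{\underline v,\underline a}=\max_{i:\alpha_i\ne0}e^{-a_i}$, and define $\iota^1_{\underline v}(\|\cdot\|',\underline a)(w)=\inf\{\sum_j\|w_j\|'\,\|w_j\|^{NA}_{\underline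 v,\underline a}: w=\sum_j w_j\}$, the infimum over all finite decompositions of $w$ as a sum of vectors of $V$. *)

theory Defs
  imports "HOL-Analysis.Analysis"
begin

text \<open>The complex vector space V is a type 'v with a scalar multiplication
  smul :: complex => 'v => 'v satisfying the vector_space axioms (library locale).\<close>

definition is_norm :: "(complex \<Rightarrow> 'v \<Rightarrow> 'v) \<Rightarrow> ('v::ab_group_add \<Rightarrow> real) \<Rightarrow> bool" where
  "is_norm smul nrm \<longleftrightarrow>
     (\<forall>x. 0 \<le> nrm x) \<and> (\<forall>x. nrm x = 0 \<longleftrightarrow> x = 0) \<and>
     (\<forall>c x. nrm (smul c x) = cmod c * nrm x) \<and>
     (\<forall>x y. nrm (x + y) \<le> nrm x + nrm y)"

definition hermitian_form :: "(complex \<Rightarrow> 'v \<Rightarrow> 'v) \<Rightarrow> ('v::ab_group_add \<Rightarrow> 'v \<Rightarrow> complex) \<Rightarrow> bool" where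
  "hermitian_form smul h \<longleftrightarrow>
     (\<forall>x y z. h (x + y) z = h x z + h y z) \<and>
     (\<forall>c x y. h (smul c x) y = c * h x y) \<and>
     (\<forall>x y. h x y = cnj (h y x)) \<and>
     (\<forall>x. x \<noteq> 0 \<longrightarrow> 0 < Re (h x x))"

definition hermitian_norm_orth :: "(complex \<Rightarrow> 'v \<Rightarrow> 'v) \<Rightarrow> ('v::ab_group_add \<Rightarrow> real) \<Rightarrow> nat \<Rightarrow> (nat \<Rightarrow> 'v) \<Rightarrow> bool" where
  "hermitian_norm_orth smul nrm N v \<longleftrightarrow>
     (\<exists>h. hermitian_form smul h \<and> (\<forall>x. nrm x = sqrt (Re (h x x))) \<and>
          (\<forall>i<N. \<forall>j<N. i \<noteq> j \<longrightarrow> h (v i) (v j) = 0))"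

definition is_basis :: "(complex \<Rightarrow> 'v \<Rightarrow> 'v) \<Rightarrow> nat \<Rightarrow> (nat \<Rightarrow> 'v::ab_group_add) \<Rightarrow> bool" where
  "is_basis smul N v \<longleftrightarrow> inj_on v {..<N} \<and> \<not> module.dependent smul (v ` {..<N}) \<and>
     module.span smul (v ` {..<N}) = UNIV"

definition coord :: "(complex \<Rightarrow> 'v \<Rightarrow> 'v) \<Rightarrow> nat \<Rightarrow> (nat \<Rightarrow> 'v::ab_group_add) \<Rightarrow> 'v \<Rightarrow> nat \<Rightarrow> complex" where
  "coord smul N v w i = module.representation smul (v ` {..<N}) w (v i)"

definition succ_min :: "(complex \<Rightarrow> 'v \<Rightarrow> 'v) \<Rightarrow> ('v::ab_group_add \<Rightarrow> real) \<Rightarrow> ('v \<Rightarrow> real) \<Rightarrow> nat \<Rightarrow> real" where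
  "succ_min smul n1 n2 i =
     (SUP W \<in> {W. module.subspace smul W \<and> vector_space.dim smul W = i}.
        INF w \<in> W - {0}. ln (n2 w / n1 w))"

definition dist_p :: "(complex \<Rightarrow> 'v \<Rightarrow> 'v) \<Rightarrow> nat \<Rightarrow> ereal \<Rightarrow> ('v::ab_group_add \<Rightarrow> real) \<Rightarrow> ('v \<Rightarrow> real) \<Rightarrow> real" where
  "dist_p smul N p n1 n2 =
     (if p = \<infinity> then Max ((\<lambda>i. \<bar>succ_min smul n1 n2 i\<bar>) ` {1..N})
      else ((\<Sum>i=1..N. \<bar>succ_min smul n1 n2 i\<bar> powr real_of_ereal p) / real N)
             powr (1 / real_of_ereal p))"

text \<open>iota_v(nrm, a): the Hermitian norm with orthogonal basis v and
  iota(v_i) = nrm(v_i) e^(-a_i), written out in coordinates.\<close>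
definition iota :: "(complex \<Rightarrow> 'v \<Rightarrow> 'v) \<Rightarrow> nat \<Rightarrow> (nat \<Rightarrow> 'v::ab_group_add) \<Rightarrow> ('v \<Rightarrow> real) \<Rightarrow> (nat \<Rightarrow> real) \<Rightarrow> 'v \<Rightarrow> real" where
  "iota smul N v nrm a w =
     sqrt (\<Sum>i<N. (cmod (coord smul N v w i))\<^sup>2 * (nrm (v i) * exp (- a i))\<^sup>2)"

definition na_norm :: "(complex \<Rightarrow> 'v \<Rightarrow> 'v) \<Rightarrow> nat \<Rightarrow> (nat \<Rightarrow> 'v::ab_group_add) \<Rightarrow> (nat \<Rightarrow> real) \<Rightarrow> 'v \<Rightarrow> real" where
  "na_norm smul N v a w =
     (if w = 0 then 0 else Max ((\<lambda>i. exp (- a i)) ` {i. i < N \<and> coord smul N v w i \<noteq> 0}))"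

definition iota1 :: "(complex \<Rightarrow> 'v \<Rightarrow> 'v) \<Rightarrow> nat \<Rightarrow> (nat \<Rightarrow> 'v::ab_group_add) \<Rightarrow> ('v \<Rightarrow> real) \<Rightarrow> (nat \<Rightarrow> real) \<Rightarrow> 'v \<Rightarrow> real" where
  "iota1 smul N v nrm a w =
     Inf {(\<Sum>u\<leftarrow>ws. nrm u * na_norm smul N v a u) | ws. sum_list ws = w}"

end

theory Submission
  imports Defs
begin



locale lsetup = vector_space smul for smul :: "complex \<Rightarrow> 'v::ab_group_add \<Rightarrow> 'v" +
  fixes N :: nat and v :: "nat \<Rightarrow> 'v"
  assumes basis: "is_basis smul N v"
begin

abbreviation "B \<equiv> v ` {..<N}"

lemma inj: "inj_on v {..<N}" and indep: "independent B" and spanB: "span B = UNIV"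
  using basis unfolding is_basis_def by auto

lemma fdvs: "finite_dimensional_vector_space smul B"
  by unfold_locales (use indep spanB in auto)

lemma coord_expand: "w = (\<Sum>i<N. smul (coord smul N v w i) (v i))"
proof -
  have "w = (\<Sum>b\<in>B. smul (representation B w b) b)"
    by (rule sum_representation_eq[symmetric]) (use indep spanB in auto)
  also have "\<dots> = (\<Sum>i<N. smul (coord smul N v w i) (v i))"
    by (subst sum.reindex[OF inj]) (simp add: coord_def)
  finally show ?thesis .
qed

lemma coord_sum: assumes "j < N"
  shows "coord smul N v (\<Sum>i<N. smul (\<alpha> i) (v i)) j = \<alpha> j"
proof -
  have "coord smul N v (\<Sum>i<N. smul (\<alpha> i) (v i)) j
      = (\<Sum>i<N. \<alpha> i * representation B (v i) (v j))"
    unfolding coord_def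
    by (subst representation_sum[OF indep]) (auto simp: representation_scale[OF indep] spanB)
  also have "\<dots> = (\<Sum>i<N. if i = j then \<alpha> i else 0)"
    apply (rule sum.cong, simp)
    using inj assms by (auto simp: representation_basis[OF indep] inj_on_def)
  also have "\<dots> = \<alpha> j" using assms by simp
  finally show ?thesis .
qed

lemma coord_add: "coord smul N v (x + y) i = coord smul N v x i + coord smul N v y i"
  unfolding coord_def by (simp add: representation_add[OF indep] spanB)

lemma coord_scale: "coord smul N v (smul c x) i = c * coord smul N v x i"
  unfolding coord_def by (simp add: representation_scale[OF indep] spanB)

lemma coord_zero: "coord smul N v 0 i = 0"
  unfolding coord_def by (simp add: representation_zero)

lemma coord_eq0: "(\<forall>i<N. coord smul N v w i = 0) \<Longrightarrow> w = 0"
  by (subst coord_expand) simp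

lemma v_nz: assumes "i < N" shows "v i \<noteq> 0"
proof
  assume "v i = 0"
  then have "0 \<in> B" using assms by (metis image_eqI lessThan_iff)
  then show False using dependent_zero[of B] indep by simp
qed

end



context fixes smul :: "complex \<Rightarrow> 'v::ab_group_add \<Rightarrow> 'v" and h
  assumes hf: "hermitian_form smul h"
begin

lemma h_add1: "h (x + y) z = h x z + h y z" using hf unfolding hermitian_form_def by blast
lemma h_scale1: "h (smul c x) y = c * h x y" using hf unfolding hermitian_form_def by blast
lemma h_cnj: "h x y = cnj (h y x)" using hf unfolding hermitian_form_def by blast
lemma h_pos: "x \<noteq> 0 \<Longrightarrow> 0 < Re (h x x)" using hf unfolding hermitian_form_def by blast

lemma h_zero1: "h 0 y = 0"
  using h_add1[of 0 0 y] by simp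

lemma h_add2: "h x (y + z) = h x y + h x z"
  by (subst h_cnj, simp add: h_add1) (metis h_cnj complex_cnj_cnj)

lemma h_scale2: "h x (smul c y) = cnj c * h x y"
  by (subst h_cnj, simp add: h_scale1) (metis h_cnj complex_cnj_cnj)

lemma h_zero2: "h x 0 = 0"
  using h_add2[of x 0 0] by simp

lemma h_sum1: "h (\<Sum>i\<in>I. f i) y = (\<Sum>i\<in>I. h (f i) y)"
  by (induction I rule: infinite_finite_induct) (auto simp: h_zero1 h_add1)

lemma h_sum2: "h x (\<Sum>i\<in>I. f i) = (\<Sum>i\<in>I. h x (f i))"
  by (induction I rule: infinite_finite_induct) (auto simp: h_zero2 h_add2)

lemma h_nonneg: "0 \<le> Re (h x x)"
  by (cases "x = 0") (auto simp: h_zero1 dest: h_pos[of x])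

lemma h_orth_sum:
  fixes N :: nat and v :: "nat \<Rightarrow> 'v"
  assumes orth: "\<forall>i<N. \<forall>j<N. i \<noteq> j \<longrightarrow> h (v i) (v j) = 0"
  shows "Re (h (\<Sum>i<N. smul (\<alpha> i) (v i)) (\<Sum>i<N. smul (\<alpha> i) (v i)))
        = (\<Sum>i<N. (cmod (\<alpha> i))\<^sup>2 * Re (h (v i) (v i)))"
proof -
  have "h (\<Sum>i<N. smul (\<alpha> i) (v i)) (\<Sum>i<N. smul (\<alpha> i) (v i))
      = (\<Sum>i<N. \<Sum>j<N. \<alpha> i * cnj (\<alpha> j) * h (v i) (v j))"
    apply (simp add: h_sum1 h_sum2 h_scale1 h_scale2 sum_distrib_left)
    apply (subst sum.swap)
    apply (simp add: mult_ac)
    done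
  also have "\<dots> = (\<Sum>i<N. \<alpha> i * cnj (\<alpha> i) * h (v i) (v i))"
  proof (rule sum.cong[OF refl])
    fix i assume i: "i \<in> {..<N}"
    have "(\<Sum>j<N. \<alpha> i * cnj (\<alpha> j) * h (v i) (v j)) = (\<Sum>j<N. if j = i then \<alpha> i * cnj (\<alpha> j) * h (v i) (v j) else 0)"
      by (rule sum.cong[OF refl]) (use orth i in auto)
    also have "\<dots> = \<alpha> i * cnj (\<alpha> i) * h (v i) (v i)" using i by simp
    finally show "(\<Sum>j<N. \<alpha> i * cnj (\<alpha> j) * h (v i) (v j)) = \<alpha> i * cnj (\<alpha> i) * h (v i) (v i)" .
  qed
  finally show ?thesis
    by (simp add: complex_mult_cnj cmod_power2 Re_sum flip: of_real_power)
qed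

end



lemma subseq_conv:
  fixes \<alpha> :: "nat \<Rightarrow> nat \<Rightarrow> complex"
  assumes bnd: "\<And>k i. cmod (\<alpha> k i) \<le> b i"
  shows "\<exists>r. strict_mono r \<and> (\<forall>i<m. \<exists>l. (\<lambda>k. \<alpha> (r k) i) \<longlonglongrightarrow> l)"
proof (induction m)
  case 0
  show ?case by (rule exI[of _ id]) (auto simp: strict_mono_def)
next
  case (Suc m)
  then obtain r where r: "strict_mono r" "\<forall>i<m. \<exists>l. (\<lambda>k. \<alpha> (r k) i) \<longlonglongrightarrow> l" by blast
  have "bounded (range (\<lambda>k. \<alpha> (r k) m))"
    using bnd by (auto simp: bounded_iff)
  then obtain l r' where r': "strict_mono r'" "((\<lambda>k. \<alpha> (r k) m) \<circ> r') \<longlonglongrightarrow> l"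
    using bounded_imp_convergent_subsequence by blast
  show ?case
  proof (rule exI[of _ "r \<circ> r'"], intro conjI allI impI)
    show "strict_mono (r \<circ> r')" using r r' strict_mono_o by blast
  next
    fix i assume "i < Suc m"
    then consider "i < m" | "i = m" by linarith
    then show "\<exists>l. (\<lambda>k. \<alpha> ((r \<circ> r') k) i) \<longlonglongrightarrow> l"
    proof cases
      case 1
      then obtain l' where "(\<lambda>k. \<alpha> (r k) i) \<longlonglongrightarrow> l'" using r by blast
      from LIMSEQ_subseq_LIMSEQ[OF this r'(1)] show ?thesis by (auto simp: comp_def)
    next
      case 2
      then show ?thesis using r' by (auto simp: comp_def)
    qed
  qed
qed

locale msetup = lsetup smul N v for smul :: "complex \<Rightarrow> 'v::ab_group_add \<Rightarrow> 'v" and N v +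
  fixes n n' :: "'v \<Rightarrow> real"
  assumes hn: "hermitian_norm_orth smul n N v" and nn: "is_norm smul n" and nn': "is_norm smul n'"
    and N1: "1 \<le> N"
begin

abbreviation "c w i \<equiv> coord smul N v w i"

lemma n'_nonneg: "0 \<le> n' x" and n'_zero: "n' x = 0 \<longleftrightarrow> x = 0"
  and n'_scale: "n' (smul a x) = cmod a * n' x" and n'_tri: "n' (x + y) \<le> n' x + n' y"
  using nn' unfolding is_norm_def by blast+

lemma n_nonneg: "0 \<le> n x" and n_zero: "n x = 0 \<longleftrightarrow> x = 0"
  and n_scale: "n (smul a x) = cmod a * n x" and n_tri: "n (x + y) \<le> n x + n y"
  using nn unfolding is_norm_def by blast+

lemma n_pos: "x \<noteq> 0 \<Longrightarrow> 0 < n x" using n_nonneg n_zero by (metis less_eq_real_def)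
lemma n'_pos: "x \<noteq> 0 \<Longrightarrow> 0 < n' x" using n'_nonneg n'_zero by (metis less_eq_real_def)

lemma d_pos: "i < N \<Longrightarrow> 0 < n (v i)" using n_pos v_nz by blast

lemma n'_0: "n' 0 = 0" by (simp add: n'_zero)
lemma n_0: "n 0 = 0" by (simp add: n_zero)

lemma n'_sum: "n' (\<Sum>i\<in>I. f i) \<le> (\<Sum>i\<in>I. n' (f i))"
proof (induction I rule: infinite_finite_induct)
  case (insert x F)
  then show ?case using n'_tri[of "f x" "sum f F"] by simp
qed (auto simp: n'_0)

lemma n_formula: "n w = sqrt (\<Sum>i<N. (cmod (c w i))\<^sup>2 * (n (v i))\<^sup>2)"
proof -
  obtain h where hf: "hermitian_form smul h" and hn: "\<forall>x. n x = sqrt (Re (h x x))"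
    and orth: "\<forall>i<N. \<forall>j<N. i \<noteq> j \<longrightarrow> h (v i) (v j) = 0"
    using hn unfolding hermitian_norm_orth_def by blast
  have "n w = sqrt (Re (h w w))" using hn by blast
  also have "Re (h w w) = (\<Sum>i<N. (cmod (c w i))\<^sup>2 * Re (h (v i) (v i)))"
    using h_orth_sum[OF hf orth, of "c w"] coord_expand[of w] by simp
  also have "\<dots> = (\<Sum>i<N. (cmod (c w i))\<^sup>2 * (n (v i))\<^sup>2)"
    using hn h_nonneg[OF hf] by simp
  finally show ?thesis .
qed

lemma n_coord_le: assumes "i < N" shows "cmod (c w i) * n (v i) \<le> n w"
proof -
  have "(cmod (c w i))\<^sup>2 * (n (v i))\<^sup>2 \<le> (\<Sum>i<N. (cmod (c w i))\<^sup>2 * (n (v i))\<^sup>2)"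
    by (rule member_le_sum) (use assms in auto)
  then have "(cmod (c w i) * n (v i))\<^sup>2 \<le> (\<Sum>i<N. (cmod (c w i))\<^sup>2 * (n (v i))\<^sup>2)"
    by (simp add: power_mult_distrib)
  then have "cmod (c w i) * n (v i) \<le> sqrt (\<Sum>i<N. (cmod (c w i))\<^sup>2 * (n (v i))\<^sup>2)"
    by (rule real_le_rsqrt)
  then show ?thesis using n_formula[of w] by simp
qed

lemma n'_upper: "n' w \<le> (\<Sum>i<N. n' (v i) / n (v i)) * n w"
proof -
  have "n' w = n' (\<Sum>i<N. smul (c w i) (v i))" using coord_expand[of w] by simp
  also have "\<dots> \<le> (\<Sum>i<N. cmod (c w i) * n' (v i))" using n'_sum[of "\<lambda>i. smul (c w i) (v i)" "{..<N}"] by (simp add: n'_scale)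
  also have "\<dots> \<le> (\<Sum>i<N. n w * (n' (v i) / n (v i)))"
  proof (rule sum_mono)
    fix i assume i: "i \<in> {..<N}"
    have "cmod (c w i) * n' (v i) = (cmod (c w i) * n (v i)) * (n' (v i) / n (v i))"
      using d_pos[of i] i by auto
    also have "\<dots> \<le> n w * (n' (v i) / n (v i))"
      using n_coord_le[of i w] i d_pos[of i] n'_nonneg
      by (intro mult_right_mono) auto
    finally show "cmod (c w i) * n' (v i) \<le> n w * (n' (v i) / n (v i))" .
  qed
  finally show ?thesis by (simp add: sum_distrib_left mult.commute)
qed

end



context lsetup begin

interpretation fd: finite_dimensional_vector_space smul B by (rule fdvs)

lemma cardB: "card B = N" using inj by (simp add: card_image)

lemma dim_nonempty: assumes "dim W = i" "1 \<le> i" shows "W - {0} \<noteq> {}"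
proof
  assume "W - {0} = {}"
  then have "W \<subseteq> {0}" by auto
  then have "dim W \<le> dim {0::'v}" by (rule fd.dim_subset)
  then show False using assms by simp
qed

lemma exists_dim: assumes "i \<le> N" shows "\<exists>W. subspace W \<and> dim W = i"
proof (intro exI conjI)
  show "subspace (span (v ` {..<i}))" by (rule subspace_span)
  have ind: "independent (v ` {..<i})" by (rule independent_mono[OF indep]) (use assms in auto)
  have "inj_on v {..<i}" by (rule inj_on_subset[OF inj]) (use assms in auto)
  then show "dim (span (v ` {..<i})) = i"
    using dim_span_eq_card_independent[OF ind] by (simp add: card_image)
qed

lemma S_N: "{W. subspace W \<and> dim W = N} = {UNIV}"
proof -
  have "W = UNIV" if "subspace W" "dim W = N" for W
  proof -
    have "span W = UNIV" using that fd.dim_eq_full cardB by (simp add: fd.dimension_def)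
    then show ?thesis using that span_eq_iff by metis
  qed
  moreover have "dim (UNIV::'v set) = N" using cardB by simp
  ultimately show ?thesis using subspace_UNIV by auto
qed

lemma succ_min_bound:
  assumes "1 \<le> i" "i \<le> N" and bnd: "\<And>w. w \<noteq> 0 \<Longrightarrow> \<bar>ln (m2 w / m1 w)\<bar> \<le> C"
  shows "\<bar>succ_min smul m1 m2 i\<bar> \<le> C"
proof -
  define S where "S = {W. subspace W \<and> dim W = i}"
  have Sne: "S \<noteq> {}" using exists_dim[OF assms(2)] by (auto simp: S_def)
  have inf: "- C \<le> (INF w\<in>W-{0}. ln (m2 w / m1 w)) \<and> (INF w\<in>W-{0}. ln (m2 w / m1 w)) \<le> C"
    if W: "W \<in> S" for W
  proof -
    have ne: "W - {0} \<noteq> {}" using W dim_nonempty assms(1) by (auto simp: S_def)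
    then obtain w0 where w0: "w0 \<in> W - {0}" by blast
    have lb: "\<And>x. x \<in> W - {0} \<Longrightarrow> - C \<le> ln (m2 x / m1 x)" using bnd by force
    have ub: "\<And>x. x \<in> W - {0} \<Longrightarrow> ln (m2 x / m1 x) \<le> C" using bnd by force
    have "- C \<le> (INF w\<in>W-{0}. ln (m2 w / m1 w))"
      by (rule cINF_greatest[OF ne lb])
    moreover have "(INF w\<in>W-{0}. ln (m2 w / m1 w)) \<le> C"
    proof (rule cINF_lower2[where x=w0])
      show "bdd_below ((\<lambda>w. ln (m2 w / m1 w)) ` (W - {0}))"
        by (rule bdd_belowI2[where m="-C"]) (rule lb)
    qed (use ub w0 in auto)
    ultimately show ?thesis by blast
  qed
  have "(SUP W\<in>S. INF w\<in>W-{0}. ln (m2 w / m1 w)) \<le> C"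
    by (rule cSUP_least[OF Sne]) (use inf in blast)
  moreover have "- C \<le> (SUP W\<in>S. INF w\<in>W-{0}. ln (m2 w / m1 w))"
  proof -
    obtain W0 where "W0 \<in> S" using Sne by blast
    then show ?thesis
    proof (rule cSUP_upper2[rotated])
      show "bdd_above ((\<lambda>W. INF w\<in>W-{0}. ln (m2 w / m1 w)) ` S)"
        by (rule bdd_aboveI2) (use inf in blast)
    qed (use inf \<open>W0 \<in> S\<close> in auto)
  qed
  ultimately show ?thesis unfolding succ_min_def S_def by (simp add: abs_le_iff)
qed

lemma succ_min_1_ge:
  assumes homog: "\<And>a w. a \<noteq> 0 \<Longrightarrow> w \<noteq> 0 \<Longrightarrow> ln (m2 (smul a w) / m1 (smul a w)) = ln (m2 w / m1 w)"
    and bnd: "\<And>w. w \<noteq> 0 \<Longrightarrow> \<bar>ln (m2 w / m1 w)\<bar> \<le> K" and w: "w \<noteq> 0"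
  shows "ln (m2 w / m1 w) \<le> succ_min smul m1 m2 1"
proof -
  define S where "S = {W. subspace W \<and> dim W = (1::nat)}"
  have inS: "span {w} \<in> S" using w by (auto simp: S_def subspace_span)
  have img: "(\<lambda>x. ln (m2 x / m1 x)) ` (span {w} - {0}) = {ln (m2 w / m1 w)}"
  proof -
    have "ln (m2 x / m1 x) = ln (m2 w / m1 w)" if "x \<in> span {w} - {0}" for x
    proof -
      have "x \<in> range (\<lambda>k. smul k w)" using that span_singleton by blast
      then obtain k where k: "x = smul k w" by blast
      have "k \<noteq> 0" using that k by auto
      then show ?thesis using homog w k by simp
    qed
    moreover have "w \<in> span {w} - {0}" using w span_base by auto
    ultimately show ?thesis by blast
  qed
  have "(INF x\<in>span {w}-{0}. ln (m2 x / m1 x)) = ln (m2 w / m1 w)"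
    using img by simp
  moreover have "(INF x\<in>span {w}-{0}. ln (m2 x / m1 x)) \<le> (SUP W\<in>S. INF x\<in>W-{0}. ln (m2 x / m1 x))"
  proof (rule cSUP_upper[OF inS], rule bdd_aboveI2)
    fix W assume W: "W \<in> S"
    have ne: "W - {0} \<noteq> {}" using W dim_nonempty by (auto simp: S_def)
    then obtain w0 where w0: "w0 \<in> W - {0}" by blast
    have lb: "\<And>x. x \<in> W - {0} \<Longrightarrow> - K \<le> ln (m2 x / m1 x)" using bnd by force
    show "(INF x\<in>W-{0}. ln (m2 x / m1 x)) \<le> K"
    proof (rule cINF_lower2[where x=w0])
      show "bdd_below ((\<lambda>x. ln (m2 x / m1 x)) ` (W - {0}))"
        by (rule bdd_belowI2[where m="-K"]) (rule lb)
    qed (use bnd w0 in \<open>force simp: abs_le_iff\<close>)+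
  qed
  ultimately show ?thesis unfolding succ_min_def S_def by simp
qed

lemma succ_min_N_le:
  assumes bnd: "\<And>w. w \<noteq> 0 \<Longrightarrow> \<bar>ln (m2 w / m1 w)\<bar> \<le> K" and w: "w \<noteq> 0"
  shows "succ_min smul m1 m2 N \<le> ln (m2 w / m1 w)"
proof -
  have "succ_min smul m1 m2 N = (INF x\<in>UNIV-{0}. ln (m2 x / m1 x))"
    unfolding succ_min_def S_N by simp
  also have "\<dots> \<le> ln (m2 w / m1 w)"
  proof (rule cINF_lower)
    have lb: "\<And>x. x \<in> UNIV - {0} \<Longrightarrow> - K \<le> ln (m2 x / m1 x)" using bnd by force
    show "bdd_below ((\<lambda>x. ln (m2 x / m1 x)) ` (UNIV - {0}))"
      by (rule bdd_belowI2[where m="-K"]) (rule lb)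
  qed (use w in auto)
  finally show ?thesis .
qed

end



context msetup begin

lemma n'_lower: "\<exists>k>0. \<forall>w. k * n w \<le> n' w"
proof (rule ccontr)
  assume neg: "\<not> ?thesis"
  have "\<forall>j. \<exists>w. n' w < inverse (real (Suc j)) * n w"
  proof
    fix j
    have "inverse (real (Suc j)) > 0" by simp
    then show "\<exists>w. n' w < inverse (real (Suc j)) * n w" using neg by (auto simp: not_le)
  qed
  from choice[OF this] obtain w where w': "\<forall>j. n' (w j) < inverse (real (Suc j)) * n (w j)" by blast
  have w: "n' (w j) < inverse (real (Suc j)) * n (w j)" for j using w' by blast
  have wnz: "w j \<noteq> 0" for j
  proof
    assume "w j = 0" then show False using w[of j] by (simp add: n'_0 n_0)
  qed
  define u where "u j = smul (complex_of_real (inverse (n (w j)))) (w j)" for j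
  have nu: "n (u j) = 1" for j
    using n_pos[OF wnz[of j]] by (simp add: u_def n_scale norm_inverse)
  have n'u: "n' (u j) < inverse (real (Suc j))" for j
  proof -
    have p: "0 < n (w j)" using n_pos[OF wnz[of j]] .
    have "n' (u j) = inverse (n (w j)) * n' (w j)" using p by (simp add: u_def n'_scale norm_inverse)
    also have "\<dots> < inverse (n (w j)) * (inverse (real (Suc j)) * n (w j))"
      using w[of j] p by (intro mult_strict_left_mono) auto
    also have "\<dots> = inverse (real (Suc j))" using p by simp
    finally show ?thesis .
  qed
  define \<alpha> where "\<alpha> j i = (if i < N then c (u j) i else 0)" for j i
  define b where "b i = (if i < N then inverse (n (v i)) else 0)" for i
  have bnd: "cmod (\<alpha> j i) \<le> b i" for j i
  proof (cases "i < N")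
    case True
    have "cmod (c (u j) i) * n (v i) \<le> 1" using n_coord_le[OF True, of "u j"] nu by simp
    then show ?thesis using True d_pos[OF True] by (simp add: \<alpha>_def b_def field_simps)
  qed (simp add: \<alpha>_def b_def)
  obtain r where r: "strict_mono r" "\<forall>i<N. \<exists>l. (\<lambda>k. \<alpha> (r k) i) \<longlonglongrightarrow> l"
    using subseq_conv[of \<alpha> b N, OF bnd] by blast
  have "\<forall>i. \<exists>l. i < N \<longrightarrow> (\<lambda>k. \<alpha> (r k) i) \<longlonglongrightarrow> l" using r(2) by blast
  from choice[OF this] obtain \<beta> where \<beta>': "\<forall>i. i < N \<longrightarrow> (\<lambda>k. \<alpha> (r k) i) \<longlonglongrightarrow> \<beta> i" by blast
  have \<beta>: "(\<lambda>k. \<alpha> (r k) i) \<longlonglongrightarrow> \<beta> i" if "i < N" for i using \<beta>' that by blast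
  define uu where "uu = (\<Sum>i<N. smul (\<beta> i) (v i))"
  have ur: "u j = (\<Sum>i<N. smul (\<alpha> j i) (v i))" for j
    by (subst coord_expand) (simp add: \<alpha>_def)
  have diff: "uu = u (r k) + (\<Sum>i<N. smul (\<beta> i - \<alpha> (r k) i) (v i))" for k
  proof -
    have "(\<Sum>i<N. smul (\<beta> i - \<alpha> (r k) i) (v i)) = uu - u (r k)"
      by (simp add: uu_def ur scale_left_diff_distrib sum_subtractf)
    then show ?thesis by simp
  qed
  have ineq: "n' uu \<le> inverse (real (Suc (r k))) + (\<Sum>i<N. cmod (\<beta> i - \<alpha> (r k) i) * n' (v i))" for k
  proof -
    have "n' uu \<le> n' (u (r k)) + n' (\<Sum>i<N. smul (\<beta> i - \<alpha> (r k) i) (v i))"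
      using n'_tri[of "u (r k)" "\<Sum>i<N. smul (\<beta> i - \<alpha> (r k) i) (v i)"] diff[of k] by simp
    also have "n' (\<Sum>i<N. smul (\<beta> i - \<alpha> (r k) i) (v i)) \<le> (\<Sum>i<N. cmod (\<beta> i - \<alpha> (r k) i) * n' (v i))"
      using n'_sum[of "\<lambda>i. smul (\<beta> i - \<alpha> (r k) i) (v i)" "{..<N}"] by (simp add: n'_scale)
    finally show ?thesis using n'u[of "r k"] by linarith
  qed
  have lim1: "(\<lambda>k. inverse (real (Suc (r k)))) \<longlonglongrightarrow> 0"
    using LIMSEQ_subseq_LIMSEQ[OF LIMSEQ_inverse_real_of_nat r(1)] by (simp add: comp_def)
  have lim2: "(\<lambda>k. \<Sum>i<N. cmod (\<beta> i - \<alpha> (r k) i) * n' (v i)) \<longlonglongrightarrow> (\<Sum>i<N. cmod (\<beta> i - \<beta> i) * n' (v i))"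
    by (intro tendsto_intros \<beta>) auto
  have lim: "(\<lambda>k. inverse (real (Suc (r k))) + (\<Sum>i<N. cmod (\<beta> i - \<alpha> (r k) i) * n' (v i))) \<longlonglongrightarrow> 0"
    using tendsto_add[OF lim1 lim2] by simp
  have "n' uu \<le> 0"
    by (rule LIMSEQ_le_const[OF lim]) (use ineq in blast)
  then have "n' uu = 0" using n'_nonneg[of uu] by (intro antisym)
  then have "uu = 0" using n'_zero by blast
  then have \<beta>0: "\<beta> i = 0" if "i < N" for i
    using coord_sum[OF that, of \<beta>] coord_zero by (simp add: uu_def)
  have lim3: "(\<lambda>k. \<Sum>i<N. (cmod (\<alpha> (r k) i))\<^sup>2 * (n (v i))\<^sup>2) \<longlonglongrightarrow> (\<Sum>i<N. (cmod (\<beta> i))\<^sup>2 * (n (v i))\<^sup>2)"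
    by (intro tendsto_intros \<beta>) auto
  have one: "(\<Sum>i<N. (cmod (\<alpha> j i))\<^sup>2 * (n (v i))\<^sup>2) = 1" for j
  proof -
    have "sqrt (\<Sum>i<N. (cmod (\<alpha> j i))\<^sup>2 * (n (v i))\<^sup>2) = 1"
      using nu[of j] n_formula[of "u j"] by (simp add: \<alpha>_def)
    then show ?thesis by simp
  qed
  have z: "(\<Sum>i<N. (cmod (\<beta> i))\<^sup>2 * (n (v i))\<^sup>2) = 0" using \<beta>0 by simp
  have eq: "(\<lambda>k. \<Sum>i<N. (cmod (\<alpha> (r k) i))\<^sup>2 * (n (v i))\<^sup>2) = (\<lambda>k. 1)"
    by (rule ext) (rule one)
  have "(\<lambda>k. 1::real) \<longlonglongrightarrow> 0" using lim3 by (simp only: eq z)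
  moreover have "(\<lambda>k. 1::real) \<longlonglongrightarrow> 1" by (rule tendsto_const)
  ultimately have "(1::real) = 0" by (rule LIMSEQ_unique[rotated])
  then show False by simp
qed

lemma ratio_bound: "\<exists>K. \<forall>w. w \<noteq> 0 \<longrightarrow> \<bar>ln (n' w / n w)\<bar> \<le> K"
proof -
  obtain k where k: "k > 0" "\<And>w. k * n w \<le> n' w" using n'_lower by blast
  define A where "A = (\<Sum>i<N. n' (v i) / n (v i))"
  show ?thesis
  proof (intro exI allI impI)
    fix w :: 'v assume w: "w \<noteq> 0"
    have p: "0 < n w" "0 < n' w" using n_pos n'_pos w by auto
    have r1: "k \<le> n' w / n w" using k(2)[of w] p by (simp add: field_simps)
    have r2: "n' w / n w \<le> A" using n'_upper[of w] p by (simp add: A_def field_simps)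
    have l1: "ln k \<le> ln (n' w / n w)" using r1 k(1) by simp
    have q: "0 < n' w / n w" using p by simp
    have Ap: "0 < A" using q r2 by linarith
    have l2: "ln (n' w / n w) \<le> ln A" using ln_le_cancel_iff[OF q Ap] r2 by blast
    from l1 l2 show "\<bar>ln (n' w / n w)\<bar> \<le> \<bar>ln k\<bar> + \<bar>ln A\<bar>" by linarith
  qed
qed

abbreviation "D \<equiv> dist_p smul N \<infinity> n n'"

lemma D_eq: "D = Max ((\<lambda>i. \<bar>succ_min smul n n' i\<bar>) ` {1..N})"
  by (simp add: dist_p_def)

lemma D_ge: "i \<in> {1..N} \<Longrightarrow> \<bar>succ_min smul n n' i\<bar> \<le> D"
  unfolding D_eq by (rule Max_ge) auto

lemma D_nonneg: "0 \<le> D" using D_ge[of 1] N1 by force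

lemma D_bound: assumes w: "w \<noteq> 0" shows "\<bar>ln (n' w / n w)\<bar> \<le> D"
proof -
  obtain K where K: "\<And>w. w \<noteq> 0 \<Longrightarrow> \<bar>ln (n' w / n w)\<bar> \<le> K" using ratio_bound by blast
  have homog: "ln (n' (smul a x) / n (smul a x)) = ln (n' x / n x)" if "a \<noteq> 0" for a x
    using that by (simp add: n_scale n'_scale)
  have "ln (n' w / n w) \<le> succ_min smul n n' 1"
    by (rule succ_min_1_ge[OF homog K w])
  moreover have "succ_min smul n n' N \<le> ln (n' w / n w)"
    by (rule succ_min_N_le[OF K w])
  moreover have "\<bar>succ_min smul n n' 1\<bar> \<le> D" "\<bar>succ_min smul n n' N\<bar> \<le> D"
    using D_ge N1 by auto
  ultimately show ?thesis by linarith
qed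

end



context msetup begin

abbreviation "io a \<equiv> iota smul N v n a"
abbreviation "io1 a \<equiv> iota1 smul N v n' a"
abbreviation "na a \<equiv> na_norm smul N v a"

lemma io_L2: "io a w = L2_set (\<lambda>i. cmod (c w i) * (n (v i) * exp (- a i))) {..<N}"
  unfolding iota_def L2_set_def by (simp add: power_mult_distrib)

lemma io_nonneg: "0 \<le> io a w" unfolding iota_def by (simp add: sum_nonneg)

lemma io_0: "io a 0 = 0" unfolding iota_def by (simp add: coord_zero)

lemma io_tri: "io a (x + y) \<le> io a x + io a y"
proof -
  have "io a (x + y) \<le> L2_set (\<lambda>i. cmod (c x i) * (n (v i) * exp (- a i)) + cmod (c y i) * (n (v i) * exp (- a i))) {..<N}"
    unfolding io_L2
  proof (rule L2_set_mono)
    fix i assume "i \<in> {..<N}"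
    have "0 \<le> n (v i) * exp (- a i)" using n_nonneg by simp
    then show "cmod (c (x + y) i) * (n (v i) * exp (- a i)) \<le> cmod (c x i) * (n (v i) * exp (- a i)) + cmod (c y i) * (n (v i) * exp (- a i))"
      unfolding coord_add distrib_right[symmetric] by (intro mult_right_mono norm_triangle_ineq)
    show "0 \<le> cmod (c (x + y) i) * (n (v i) * exp (- a i))" using n_nonneg by simp
  qed
  also have "\<dots> \<le> io a x + io a y" unfolding io_L2 by (rule L2_set_triangle_ineq)
  finally show ?thesis .
qed

lemma io_sum_list: "io a (sum_list ws) \<le> (\<Sum>u\<leftarrow>ws. io a u)"
proof (induction ws)
  case Nil then show ?case by (simp add: io_0)
next
  case (Cons u ws)
  then show ?case using io_tri[of a u "sum_list ws"] by simp
qed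

lemma io_coord_le: assumes "i < N"
  shows "cmod (c w i) * (n (v i) * exp (- a i)) \<le> io a w"
proof -
  have "(cmod (c w i))\<^sup>2 * (n (v i) * exp (- a i))\<^sup>2 \<le> (\<Sum>i<N. (cmod (c w i))\<^sup>2 * (n (v i) * exp (- a i))\<^sup>2)"
    by (rule member_le_sum) (use assms in auto)
  then have "(cmod (c w i) * (n (v i) * exp (- a i)))\<^sup>2 \<le> (\<Sum>i<N. (cmod (c w i))\<^sup>2 * (n (v i) * exp (- a i))\<^sup>2)"
    by (simp add: power_mult_distrib)
  then show ?thesis unfolding iota_def by (rule real_le_rsqrt)
qed

lemma io_pos: assumes "w \<noteq> 0" shows "0 < io a w"
proof -
  obtain i where i: "i < N" "c w i \<noteq> 0" using coord_eq0 assms by blast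
  have "0 < cmod (c w i) * (n (v i) * exp (- a i))" using i d_pos by simp
  also have "\<dots> \<le> io a w" by (rule io_coord_le[OF i(1)])
  finally show ?thesis .
qed

lemma na_ge: assumes "i < N" "c u i \<noteq> 0" shows "exp (- a i) \<le> na a u"
proof -
  have "u \<noteq> 0" using assms coord_zero by auto
  have "exp (- a i) \<le> Max ((\<lambda>i. exp (- a i)) ` {i. i < N \<and> c u i \<noteq> 0})"
    by (rule Max_ge) (use assms in auto)
  then show ?thesis unfolding na_norm_def using \<open>u \<noteq> 0\<close> by simp
qed

lemma na_nonneg: "0 \<le> na a u"
proof (cases "u = 0")
  case False
  then obtain i where i: "i < N" "c u i \<noteq> 0" using coord_eq0 by blast
  have "0 \<le> exp (- a i)" by simp
  also have "\<dots> \<le> na a u" by (rule na_ge[OF i])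
  finally show ?thesis .
qed (simp add: na_norm_def)

lemma io_le_nna: "io a u \<le> n u * na a u"
proof -
  have "(\<Sum>i<N. (cmod (c u i))\<^sup>2 * (n (v i) * exp (- a i))\<^sup>2)
      \<le> (\<Sum>i<N. (na a u)\<^sup>2 * ((cmod (c u i))\<^sup>2 * (n (v i))\<^sup>2))"
  proof (rule sum_mono)
    fix i assume i: "i \<in> {..<N}"
    show "(cmod (c u i))\<^sup>2 * (n (v i) * exp (- a i))\<^sup>2 \<le> (na a u)\<^sup>2 * ((cmod (c u i))\<^sup>2 * (n (v i))\<^sup>2)"
    proof (cases "c u i = 0")
      case False
      have "exp (- a i) \<le> na a u" using na_ge[of i u a] i False by simp
      then have "(exp (- a i))\<^sup>2 \<le> (na a u)\<^sup>2" by (intro power_mono) auto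
      then have "(cmod (c u i))\<^sup>2 * (n (v i))\<^sup>2 * (exp (- a i))\<^sup>2 \<le> (cmod (c u i))\<^sup>2 * (n (v i))\<^sup>2 * (na a u)\<^sup>2"
        by (rule mult_left_mono) simp
      then show ?thesis
        by (simp add: power_mult_distrib mult_ac)
    qed simp
  qed
  also have "\<dots> = (na a u)\<^sup>2 * (n u)\<^sup>2"
    using n_formula[of u] by (simp add: sum_distrib_left sum_nonneg mult_ac)
  finally have "(io a u)\<^sup>2 \<le> (n u * na a u)\<^sup>2"
    unfolding iota_def by (simp add: sum_nonneg power_mult_distrib mult_ac)
  then show ?thesis by (rule power2_le_imp_le) (intro mult_nonneg_nonneg n_nonneg na_nonneg)
qed

lemma coord_v: "i < N \<Longrightarrow> j < N \<Longrightarrow> c (v i) j = (if j = i then 1 else 0)"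
  unfolding coord_def using inj by (auto simp: representation_basis[OF indep] inj_on_def)

lemma na_single: assumes "i < N" "\<alpha> \<noteq> 0" shows "na a (smul \<alpha> (v i)) = exp (- a i)"
proof -
  have cs: "c (smul \<alpha> (v i)) j = (if j = i then \<alpha> else 0)" if "j < N" for j
    using coord_v[OF assms(1) that] by (simp add: coord_scale)
  have nz: "smul \<alpha> (v i) \<noteq> 0"
  proof
    assume "smul \<alpha> (v i) = 0"
    then have "c (smul \<alpha> (v i)) i = 0" by (simp only: coord_zero)
    with cs[OF assms(1)] assms(2) show False by simp
  qed
  have "{j. j < N \<and> c (smul \<alpha> (v i)) j \<noteq> 0} = {i}" using cs assms by (auto split: if_split_asm)
  then show ?thesis using nz unfolding na_norm_def by simp
qed

lemma io1_set_ne: "{(\<Sum>u\<leftarrow>ws. n' u * na a u) | ws. sum_list ws = w} \<noteq> {}"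
  by (auto intro: exI[of _ "[w]"])

lemma io1_lower: "exp (- D) * io a w \<le> io1 a w"
  unfolding iota1_def
proof (rule cInf_greatest[OF io1_set_ne])
  fix x assume "x \<in> {(\<Sum>u\<leftarrow>ws. n' u * na a u) | ws. sum_list ws = w}"
  then obtain ws where ws: "sum_list ws = w" "x = (\<Sum>u\<leftarrow>ws. n' u * na a u)" by blast
  have tm: "exp (- D) * io a u \<le> n' u * na a u" for u
  proof (cases "u = 0")
    case True then show ?thesis by (simp add: io_0 n'_0)
  next
    case False
    have "- D \<le> ln (n' u / n u)" using D_bound[OF False] by linarith
    then have "exp (- D) \<le> exp (ln (n' u / n u))" by simp
    moreover have "0 < n' u / n u" using n_pos[OF False] n'_pos[OF False] by simp
    ultimately have "exp (- D) \<le> n' u / n u" by simp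
    then have e: "exp (- D) * n u \<le> n' u" using n_pos[OF False] by (simp add: field_simps)
    have "exp (- D) * io a u \<le> exp (- D) * (n u * na a u)" using io_le_nna by simp
    also have "\<dots> = (exp (- D) * n u) * na a u" by simp
    also have "\<dots> \<le> n' u * na a u" using e na_nonneg by (rule mult_right_mono)
    finally show ?thesis .
  qed
  have "exp (- D) * io a w \<le> exp (- D) * (\<Sum>u\<leftarrow>ws. io a u)"
    using io_sum_list[of a ws] ws(1) by simp
  also have "\<dots> = (\<Sum>u\<leftarrow>ws. exp (- D) * io a u)" by (simp add: sum_list_const_mult)
  also have "\<dots> \<le> x" unfolding ws(2) by (rule sum_list_mono) (rule tm)
  finally show "exp (- D) * io a w \<le> x" .
qed

lemma io1_upper: "io1 a w \<le> real N * exp D * io a w"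
proof -
  define ws where "ws = map (\<lambda>i. smul (c w i) (v i)) [0..<N]"
  have sw: "sum_list ws = w"
    unfolding ws_def by (subst coord_expand[of w]) (simp add: sum_list_distinct_conv_sum_set atLeast0LessThan)
  have "io1 a w \<le> (\<Sum>u\<leftarrow>ws. n' u * na a u)"
    unfolding iota1_def
  proof (rule cInf_lower)
    show "(\<Sum>u\<leftarrow>ws. n' u * na a u) \<in> {(\<Sum>u\<leftarrow>ws. n' u * na a u) | ws. sum_list ws = w}"
      using sw by blast
    show "bdd_below {(\<Sum>u\<leftarrow>ws. n' u * na a u) | ws. sum_list ws = w}"
      by (rule bdd_belowI[where m=0]) (auto intro!: sum_list_nonneg mult_nonneg_nonneg n'_nonneg na_nonneg)
  qed
  also have "(\<Sum>u\<leftarrow>ws. n' u * na a u) = (\<Sum>i<N. n' (smul (c w i) (v i)) * na a (smul (c w i) (v i)))"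
    unfolding ws_def by (simp add: sum_list_distinct_conv_sum_set atLeast0LessThan comp_def)
  also have "\<dots> \<le> (\<Sum>i<N. exp D * io a w)"
  proof (rule sum_mono)
    fix i assume i: "i \<in> {..<N}"
    show "n' (smul (c w i) (v i)) * na a (smul (c w i) (v i)) \<le> exp D * io a w"
    proof (cases "c w i = 0")
      case True then show ?thesis using io_nonneg[of a w] by (simp add: n'_0 io_0 scale_zero_left)
    next
      case False
      have vi: "v i \<noteq> 0" using v_nz i by simp
      have "ln (n' (v i) / n (v i)) \<le> D" using D_bound[OF vi] by linarith
      then have "exp (ln (n' (v i) / n (v i))) \<le> exp D" by simp
      moreover have "0 < n' (v i) / n (v i)" using n_pos[OF vi] n'_pos[OF vi] by simp
      ultimately have "n' (v i) / n (v i) \<le> exp D" by simp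
      then have e: "n' (v i) \<le> exp D * n (v i)" using n_pos[OF vi] by (simp add: field_simps)
      have "n' (smul (c w i) (v i)) * na a (smul (c w i) (v i)) = cmod (c w i) * n' (v i) * exp (- a i)"
        using na_single[of i "c w i" a] i False by (simp add: n'_scale)
      also have "\<dots> \<le> cmod (c w i) * (exp D * n (v i)) * exp (- a i)"
        using e by (intro mult_right_mono mult_left_mono) auto
      also have "\<dots> = exp D * (cmod (c w i) * (n (v i) * exp (- a i)))" by (simp add: mult_ac)
      also have "\<dots> \<le> exp D * io a w" using io_coord_le[of i w a] i by (intro mult_left_mono) auto
      finally show ?thesis .
    qed
  qed
  also have "\<dots> = real N * exp D * io a w" by simp
  finally show ?thesis .
qed

lemma io_ratio: assumes "w \<noteq> 0" shows "\<bar>ln (io1 a w / io a w)\<bar> \<le> D + ln (real N)"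
proof -
  have p: "0 < io a w" by (rule io_pos[OF assms])
  have lo: "exp (- D) \<le> io1 a w / io a w" using io1_lower[of a w] p by (simp add: field_simps)
  have hi: "io1 a w / io a w \<le> real N * exp D" using io1_upper[of a w] p by (simp add: field_simps)
  have q: "0 < io1 a w / io a w" using lo by (rule order.strict_trans2[rotated]) simp
  have Np: "0 < real N" using N1 by simp
  have l1: "- D \<le> ln (io1 a w / io a w)" using ln_le_cancel_iff[of "exp (- D)" "io1 a w / io a w"] lo q by simp
  have "ln (io1 a w / io a w) \<le> ln (real N * exp D)" using hi q Np by (subst ln_le_cancel_iff) auto
  then have l2: "ln (io1 a w / io a w) \<le> ln (real N) + D" using Np by (simp add: ln_mult)
  have "0 \<le> ln (real N)" using N1 by simp
  then show ?thesis using l1 l2 by linarith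
qed

end

lemma dist_p_le:
  assumes bnd: "\<And>i. i \<in> {1..N} \<Longrightarrow> \<bar>succ_min smul m1 m2 i\<bar> \<le> C" and C: "0 \<le> C" and N: "1 \<le> N" and p: "1 \<le> p"
  shows "dist_p smul N p m1 m2 \<le> C"
proof (cases "p = \<infinity>")
  case True
  then show ?thesis unfolding dist_p_def using bnd N by (auto intro!: Max.boundedI)
next
  case False
  then obtain r where r: "p = ereal r" "1 \<le> r" using p by (cases p) auto
  have "(\<Sum>i=1..N. \<bar>succ_min smul m1 m2 i\<bar> powr r) \<le> (\<Sum>i=1..N. C powr r)"
    by (rule sum_mono) (use bnd r in \<open>auto intro!: powr_mono2\<close>)
  also have "\<dots> = real N * C powr r" by simp
  finally have s: "(\<Sum>i=1..N. \<bar>succ_min smul m1 m2 i\<bar> powr r) / real N \<le> C powr r"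
    using N by (simp add: field_simps)
  have "((\<Sum>i=1..N. \<bar>succ_min smul m1 m2 i\<bar> powr r) / real N) powr (1 / r) \<le> (C powr r) powr (1 / r)"
    by (rule powr_mono2) (use s r in \<open>auto intro!: divide_nonneg_nonneg sum_nonneg\<close>)
  also have "\<dots> = C" using r C by (simp add: powr_powr powr_one)
  finally show ?thesis using r False unfolding dist_p_def by simp
qed



theorem lemma3p1:
  fixes smul :: "complex \<Rightarrow> 'v::ab_group_add \<Rightarrow> 'v"
    and N :: nat and v :: "nat \<Rightarrow> 'v" and a :: "nat \<Rightarrow> real"
    and n n' :: "'v \<Rightarrow> real" and p :: ereal
  assumes "vector_space smul"
    and "1 \<le> N"
    and "is_basis smul N v"
    and "is_norm smul n" and "hermitian_norm_orth smul n N v"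
    and "is_norm smul n'"
    and "1 \<le> p"
  shows "dist_p smul N p (iota smul N v n a) (iota1 smul N v n' a)
           \<le> dist_p smul N \<infinity> n n' + ln (real N)"
proof -
  interpret msetup smul N v n n'
    using assms by (simp add: msetup_def msetup_axioms_def lsetup_def lsetup_axioms_def)
  have bnd: "\<bar>succ_min smul (io a) (io1 a) i\<bar> \<le> D + ln (real N)" if "i \<in> {1..N}" for i
    by (rule succ_min_bound) (use that io_ratio in auto)
  have C: "0 \<le> D + ln (real N)" using D_nonneg assms(2) by simp
  show ?thesis by (rule dist_p_le[OF bnd C assms(2) assms(7)])
qed

end
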